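(* Let $p$ be an odd prime and $\alpha,X$ indeterminates over $\mathbb F_p$. For integers $0<r,s<p$ with $r+s\neq p$, \[ L_{p-1}^{(r\alpha)}(rX)\cdot L_{p-1}^{(s\alpha)}(sX)\equiv b_{r,s}(\alpha)\cdot L_{p-1}^{((r+s)\alpha)}\bigl((r+s)X\bigr)\pmod{X^p-(\alpha^p-\alpha)} \] in $\mathbb F_p(\alpha)[X]$. Furthermore, for $0<r<p$, \[ L_{p-1}^{(r\alpha)}(rX)\cdot L_{p-1}^{(-r\alpha)}(-rX)\equiv 1-\alpha^{p-1}\pmod{X^p-(\alpha^p-\alpha)}. \]
   Context: $\mathbb F_p$ is the field of $p$ elements, $\binom{x}{m}=x(x-1)\cdots(x-m+1)/m!$. $L_{p-1}^{(\alpha)}(X)=\sum_{k=0}^{p-1}\binom{\alpha-1}{p-1-k}\frac{(-X)^k}{k!}\in\mathbb F_p[\alpha,X]$, and $L_{p-1}^{(c\alpha)}(cX)$ denotes the result of substituting $c\alpha$ for $\alpha$ and $cX$ for $X$. For integers $0<r,s<p$ (interpreted as elements of $\mathbb F_p$), $b_{r,s}(\alpha)=\sum_{k=0}^{p-1}(-r/s)^k\binom{r\alpha-1}{p-1-k}\binom{s\alpha-1}{k}\in\mathbb F_p[\alpha]$. *)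

theory Defs
  imports "Berlekamp_Zassenhaus.Finite_Field" "HOL-Computational_Algebra.Fraction_Field"
begin

definition gbinom :: "'a::field \<Rightarrow> nat \<Rightarrow> 'a" where
  "gbinom x m = (\<Prod>i<m. (x - of_nat i)) / of_nat (fact m)"

definition alpha :: "'p::prime_card mod_ring poly fract" where
  "alpha = to_fract [:0, 1:]"

definition cst :: "'p::prime_card mod_ring \<Rightarrow> 'p mod_ring poly fract" where
  "cst c = to_fract [:c:]"

text \<open>L_{p-1}^{(c alpha)}(c X) in F_p(alpha)[X], p = CARD('p).\<close>
definition Lsub :: "'p::prime_card mod_ring \<Rightarrow> 'p mod_ring poly fract poly" where
  "Lsub c = (let p = CARD('p) in
     (\<Sum>k\<le>p - 1. monom (gbinom (cst c * alpha - 1) (p - 1 - k)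
                          * (- cst c) ^ k / of_nat (fact k)) k))"

definition bcoef :: "'p::prime_card mod_ring \<Rightarrow> 'p mod_ring \<Rightarrow> 'p mod_ring poly fract" where
  "bcoef r s = (let p = CARD('p) in
     (\<Sum>k\<le>p - 1. (- cst r / cst s) ^ k * gbinom (cst r * alpha - 1) (p - 1 - k)
                   * gbinom (cst s * alpha - 1) k))"

definition modulus :: "'p::prime_card mod_ring poly fract poly" where
  "modulus = monom 1 CARD('p) - [: alpha ^ CARD('p) - alpha :]"

end

theory Submission
  imports Defs "Berlekamp_Zassenhaus.Berlekamp_Type_Based"
begin

lemma cst_mult: "cst (a*b) = cst a * cst b"
  unfolding cst_def by (simp add: to_fract_mult[symmetric] del: to_fract_mult)
lemma cst_add: "cst (a+b) = cst a + cst b"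
  unfolding cst_def by (simp add: to_fract_add[symmetric] del: to_fract_add)
lemma cst_one: "cst 1 = 1" unfolding cst_def by (simp add: one_pCons[symmetric])
lemma cst_zero: "cst 0 = 0" unfolding cst_def by simp
lemma cst_eq_iff: "cst a = cst b \<longleftrightarrow> a = b" unfolding cst_def by simp

interpretation cst: comm_ring_hom cst
  by unfold_locales (auto simp: cst_mult cst_add cst_one cst_zero)

lemma cst_of_nat: "(of_nat n :: 'p::prime_card mod_ring poly fract) = cst (of_nat n)"
  by (simp add: cst.hom_of_nat)

lemma card_ge: "CARD('p::prime_card) \<ge> 2" using prime_card[where 'a='p] prime_ge_2_nat by blast

lemma of_nat_card_K: "(of_nat CARD('p::prime_card) :: 'p mod_ring poly fract) = 0"
  by (simp add: cst_of_nat cst_zero)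

lemma of_nat_nz_mod: assumes "0 < k" "k < CARD('p::prime_card)"
  shows "(of_nat k :: 'p mod_ring) \<noteq> 0"
  using of_nat_0_mod_ring_dvd[where 'a='p and x=k] assms by (meson nat_dvd_not_less)

lemma of_nat_nz_K: assumes "0 < k" "k < CARD('p::prime_card)"
  shows "(of_nat k :: 'p mod_ring poly fract) \<noteq> 0"
  using of_nat_nz_mod[OF assms] by (simp add: cst_of_nat cst_eq_iff[of _ 0, unfolded cst_zero])

lemma fact_nz_K: assumes "k < CARD('p::prime_card)"
  shows "(of_nat (fact k) :: 'p mod_ring poly fract) \<noteq> 0"
proof
  assume "(of_nat (fact k) :: 'p mod_ring poly fract) = 0"
  hence "(of_nat (fact k) :: 'p mod_ring) = 0" by (simp add: cst_of_nat cst_eq_iff[of _ 0, unfolded cst_zero])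
  hence "CARD('p) dvd fact k" by (rule of_nat_0_mod_ring_dvd)
  with prime_dvd_fact_iff[OF prime_card[where 'a='p]] assms show False by auto
qed

lemma fermat_K: "cst (c::'p::prime_card mod_ring) ^ CARD('p) = cst c"
  by (simp add: cst.hom_power[symmetric])

lemma fermat1_K: assumes "(c::'p::prime_card mod_ring) \<noteq> 0" shows "cst c ^ (CARD('p) - 1) = 1"
proof -
  have "cst c ^ (CARD('p) - 1) * cst c = cst c" using fermat_K[of c] card_ge[where 'p='p]
    by (metis One_nat_def Suc_diff_1 le_trans one_le_numeral  not_one_le_zero power_Suc2 zero_less_iff_neq_zero)
  moreover have "cst c \<noteq> 0" using assms cst_eq_iff[of c 0] by (simp add: cst_zero)
  ultimately show ?thesis by (metis mult_cancel_right2)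
qed

lemma inj_of_nat_mod: "inj_on (of_nat :: nat \<Rightarrow> 'p::prime_card mod_ring) {..<CARD('p)}"
proof (rule inj_onI)
  fix i j assume ij: "i \<in> {..<CARD('p)}" "j \<in> {..<CARD('p)}" "(of_nat i :: 'p mod_ring) = of_nat j"
  show "i = j"
  proof (rule ccontr)
    assume "i \<noteq> j"
    then consider "i < j" | "j < i" by linarith
    thus False
    proof cases
      case 1
      hence "(of_nat (j - i) :: 'p mod_ring) = 0" using ij by (simp add: of_nat_diff)
      thus False using of_nat_nz_mod[where 'p='p, of "j-i"] 1 ij(2) by (simp add: less_imp_diff_less)
    next
      case 2
      hence "(of_nat (i - j) :: 'p mod_ring) = 0" using ij by (simp add: of_nat_diff)
      thus False using of_nat_nz_mod[where 'p='p, of "i-j"] 2 ij(1) by (simp add: less_imp_diff_less)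
    qed
  qed
qed

lemma image_of_nat_mod: "(of_nat :: nat \<Rightarrow> 'p::prime_card mod_ring) ` {..<CARD('p)} = UNIV"
  using surj_of_nat_mod_ring[where 'a='p] by blast

definition Ac :: "'p::prime_card mod_ring \<Rightarrow> nat \<Rightarrow> 'p mod_ring poly fract" where
  "Ac c k = gbinom (cst c * alpha - 1) (CARD('p) - 1 - k) * (- cst c) ^ k / of_nat (fact k)"

lemma coeff_Lsub: "coeff (Lsub (c::'p::prime_card mod_ring)) k = (if k < CARD('p::prime_card) then Ac c k else 0)"
proof -
  have "coeff (Lsub c) k = (\<Sum>j\<le>CARD('p) - 1. if j = k then Ac c j else 0)"
    unfolding Lsub_def Let_def Ac_def by (simp add: coeff_sum coeff_monom)
  also have "\<dots> = (if k < CARD('p) then Ac c k else 0)"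
    using card_ge[where 'p='p] by (auto simp: sum.delta')
  finally show ?thesis .
qed

lemma degree_Lsub: "degree (Lsub (c::'p::prime_card mod_ring)) \<le> CARD('p) - 1"
  by (rule degree_le) (use coeff_Lsub[of c] in auto)

lemma gbinom_Suc: "gbinom x (Suc m) = gbinom x m * (x - of_nat m) / of_nat (Suc m)"
proof -
  have "gbinom x (Suc m) = ((\<Prod>i<m. x - of_nat i) * (x - of_nat m)) / (of_nat (fact m) * of_nat (Suc m))"
    unfolding gbinom_def fact_Suc by (simp add: prod.lessThan_Suc algebra_simps)
  also have "\<dots> = gbinom x m * (x - of_nat m) / of_nat (Suc m)"
    unfolding gbinom_def by (simp only: divide_divide_eq_left[symmetric] times_divide_eq_left)
  finally show ?thesis .
qed

lemma of_nat_sub_K: assumes "k \<le> CARD('p::prime_card)"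
  shows "(of_nat (CARD('p) - k) :: 'p mod_ring poly fract) = - of_nat k"
  using assms by (simp add: of_nat_diff of_nat_card_K)

lemma field_aux1: "(k::'a::field) \<noteq> 0 \<Longrightarrow> F \<noteq> 0 \<Longrightarrow>
   c * (G * (x + k) / (- k) * u / F) = G * (- c * u) / (k * F) * (x + k)"
  by (simp add: field_simps)

lemma Ac_rec: assumes "Suc j < CARD('p::prime_card)"
  shows "cst (c::'p mod_ring) * Ac c j = Ac c (Suc j) * (cst c * alpha + of_nat (Suc j))"
proof -
  define m where "m = CARD('p) - 1 - Suc j"
  have m: "CARD('p) - 1 - j = Suc m" using assms unfolding m_def by auto
  have e1: "(of_nat m :: 'p mod_ring poly fract) = - 1 - of_nat (Suc j)"
  proof -
    have "m = CARD('p) - Suc (Suc j)" unfolding m_def by simp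
    hence "(of_nat m :: 'p mod_ring poly fract) = - of_nat (Suc (Suc j))"
      using of_nat_sub_K[where 'p='p, of "Suc (Suc j)"] assms by simp
    thus ?thesis by simp
  qed
  have e2: "(of_nat (Suc m) :: 'p mod_ring poly fract) = - of_nat (Suc j)"
    using m of_nat_sub_K[where 'p='p, of "Suc j"] assms by (simp add: Suc_diff_Suc)
  have nz1: "(of_nat (Suc j) :: 'p mod_ring poly fract) \<noteq> 0" using of_nat_nz_K[where 'p='p, of "Suc j"] assms by simp
  have nz2: "(of_nat (fact j) :: 'p mod_ring poly fract) \<noteq> 0" using fact_nz_K[where 'p='p, of j] assms by simp
  define G where "G = gbinom (cst c * alpha - 1) m"
  define u where "u = (- cst c) ^ j"
  have A1: "Ac c j = G * (cst c * alpha + of_nat (Suc j)) / (- of_nat (Suc j)) * u / of_nat (fact j)"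
    unfolding Ac_def m gbinom_Suc e1 e2 G_def u_def by simp
  have A2: "Ac c (Suc j) = G * (- cst c * u) / (of_nat (Suc j) * of_nat (fact j))"
    unfolding Ac_def G_def u_def m_def fact_Suc power_Suc by (simp only: of_nat_id of_nat_mult)
  show ?thesis unfolding A1 A2 by (rule field_aux1[OF nz1 nz2])
qed

interpretation cst_poly: map_poly_comm_ring_hom cst ..

lemma poly_id_K: "monom (1::'p::prime_card mod_ring poly fract) CARD('p) - monom 1 1
   = (\<Prod>m<CARD('p). [:0,1:] - [:of_nat m:])"
proof -
  have "map_poly cst (monom (1::'p mod_ring) CARD('p) - monom 1 1)
     = map_poly cst (\<Prod>x\<in>(UNIV::'p mod_ring set). [:0,1:] - [:x:])"
    using poly_monom_identity_mod_p by metis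
  hence "monom 1 CARD('p) - monom 1 1 = (\<Prod>x\<in>(UNIV::'p mod_ring set). [:0,1:] - [:cst x:])"
    by (simp add: cst_poly.hom_prod map_poly_monom cst_one cst_zero cst.hom_uminus cst_poly.hom_minus)
  also have "\<dots> = (\<Prod>x\<in>of_nat ` {..<CARD('p)}. [:0,1:] - [:cst x:])"
    by (simp add: image_of_nat_mod)
  also have "\<dots> = (\<Prod>m<CARD('p). [:0,1:] - [:of_nat m:])"
    by (subst prod.reindex[OF inj_of_nat_mod]) (simp add: cst_of_nat)
  finally show ?thesis .
qed

lemma P1poly: "(\<Prod>m\<in>{1..<CARD('p::prime_card)}. [:0,1:] - [:of_nat m:])
   = monom (1::'p mod_ring poly fract) (CARD('p) - 1) - 1"
proof -
  have ins: "{..<CARD('p)} = insert 0 {1..<CARD('p)}" using card_ge[where 'p='p] by auto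
  have "monom (1::'p mod_ring poly fract) 1 * (\<Prod>m\<in>{1..<CARD('p)}. [:0,1:] - [:of_nat m:])
     = (\<Prod>m<CARD('p). [:0,1:] - [:of_nat m:])"
    unfolding ins by (simp add: monom_Suc)
  also have "\<dots> = monom 1 CARD('p) - monom 1 1" by (rule poly_id_K[symmetric])
  also have "\<dots> = monom (1::'p mod_ring poly fract) 1 * (monom 1 (CARD('p) - 1) - 1)"
    using card_ge[where 'p='p] by (simp add: mult_monom right_diff_distrib)
  finally show ?thesis by (simp add: monom_eq_0_iff)
qed

lemma P1val: "(\<Prod>m\<in>{1..<CARD('p::prime_card)}. x - of_nat m) = x ^ (CARD('p) - 1) - (1::'p mod_ring poly fract)"
  using arg_cong[OF P1poly[where 'p='p], of "\<lambda>q. poly q x"] by (simp add: poly_prod poly_monom)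

lemma P2val: fixes x :: "'p::prime_card mod_ring poly fract"
  shows "(\<Sum>m\<in>{1..<CARD('p)}. (\<Prod>m'\<in>{1..<CARD('p)} - {m}. x - of_nat m')) = - (x ^ (CARD('p) - 2))"
proof -
  have "pderiv (\<Prod>m\<in>{1..<CARD('p::prime_card)}. [:0,1:] - [:of_nat m:])
     = pderiv (monom (1::'p mod_ring poly fract) (CARD('p) - 1) - 1)" by (simp only: P1poly)
  hence "(\<Sum>m\<in>{1..<CARD('p)}. \<Prod>m'\<in>{1..<CARD('p)} - {m}. [:0,1:] - [:of_nat m':] :: 'p mod_ring poly fract poly)
      = monom (- 1) (CARD('p) - 2)"
    by (simp add: pderiv_prod pderiv_diff pderiv_monom pderiv_pCons diff_diff_left of_nat_card_K numeral_2_eq_2)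
  from arg_cong[OF this, of "\<lambda>q. poly q x"] show ?thesis by (simp add: poly_prod poly_sum poly_monom)
qed

lemma wilson_K: assumes "odd CARD('p::prime_card)"
  shows "(of_nat (fact (CARD('p) - 1)) :: 'p mod_ring poly fract) = - 1"
proof -
  have "(\<Prod>m\<in>{1..<CARD('p)}. 0 - of_nat m) = (0::'p mod_ring poly fract) ^ (CARD('p) - 1) - 1"
    by (rule P1val)
  hence "(\<Prod>m\<in>{1..<CARD('p)}. (- 1) * of_nat m) = (- 1 :: 'p mod_ring poly fract)"
    using card_ge[where 'p='p] by simp
  hence "(- 1) ^ (CARD('p) - 1) * (\<Prod>m\<in>{1..<CARD('p)}. of_nat m) = (- 1 :: 'p mod_ring poly fract)"
    by (simp add: prod_uminus)
  moreover have "even (CARD('p) - 1)" using assms card_ge[where 'p='p] by simp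
  ultimately have "(\<Prod>m\<in>{1..<CARD('p)}. of_nat m) = (- 1 :: 'p mod_ring poly fract)" by simp
  moreover have "{1..<CARD('p)} = {1..CARD('p) - 1}" using card_ge[where 'p='p] by auto
  ultimately show ?thesis unfolding fact_prod[where 'a=nat] by (simp add: of_nat_prod)
qed

lemma Ac_top: assumes "odd CARD('p::prime_card)" "(c::'p mod_ring) \<noteq> 0"
  shows "Ac c (CARD('p) - 1) = - 1"
proof -
  have ev: "even (CARD('p) - 1)" using assms(1) card_ge[where 'p='p] by simp
  have h1: "(- cst c) ^ (CARD('p) - 1) = 1"
    using power_minus_even[OF ev, of "cst c"] fermat1_K[OF assms(2)] by (simp only:)
  have h0: "gbinom (cst c * alpha - 1) 0 = 1" unfolding gbinom_def by simp
  have "Ac c (CARD('p) - 1) = gbinom (cst c * alpha - 1) 0 * (- cst c) ^ (CARD('p) - 1) / of_nat (fact (CARD('p) - 1))"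
    unfolding Ac_def by (simp only: diff_self_eq_0)
  also have "\<dots> = - 1" unfolding h0 h1 wilson_K[OF assms(1)] by simp
  finally show ?thesis .
qed

lemma Acl: assumes "odd CARD('p::prime_card)" "(c::'p mod_ring) \<noteq> 0" "d < CARD('p)"
  shows "cst c ^ d * Ac c (CARD('p) - 1 - d) = - (\<Prod>m\<in>{1..d}. cst c * alpha - of_nat m)"
  using assms(3)
proof (induction d)
  case 0
  then show ?case using Ac_top[OF assms(1,2)] by simp
next
  case (Suc d)
  define j where "j = CARD('p) - 1 - Suc d"
  have sj: "Suc j = CARD('p) - 1 - d" "Suc j < CARD('p)" using Suc.prems unfolding j_def by auto
  have e: "(of_nat (CARD('p) - 1 - d) :: 'p mod_ring poly fract) = - of_nat (Suc d)"
    using of_nat_sub_K[where 'p='p, of "Suc d"] Suc.prems by simp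
  have "cst c * Ac c j = Ac c (CARD('p) - 1 - d) * (cst c * alpha - of_nat (Suc d))"
    using Ac_rec[OF sj(2), of c] unfolding sj(1) e by simp
  hence "cst c ^ Suc d * Ac c j = (cst c ^ d * Ac c (CARD('p) - 1 - d)) * (cst c * alpha - of_nat (Suc d))"
    by (simp add: mult_ac)
  also have "\<dots> = - (\<Prod>m\<in>{1..Suc d}. cst c * alpha - of_nat m)"
    using Suc by (simp add: prod.cl_ivl_Suc)
  finally show ?case unfolding j_def .
qed

lemma Ac0: assumes "odd CARD('p::prime_card)" "(c::'p mod_ring) \<noteq> 0"
  shows "Ac c 0 = 1 - alpha ^ (CARD('p) - 1)"
proof -
  have "cst c ^ (CARD('p) - 1) * Ac c (CARD('p) - 1 - (CARD('p) - 1))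
      = - (\<Prod>m\<in>{1..CARD('p) - 1}. cst c * alpha - of_nat m)"
    by (rule Acl[OF assms]) simp
  moreover have "{1..CARD('p) - 1} = {1..<CARD('p)}" using card_ge[where 'p='p] by auto
  ultimately have "Ac c 0 = - ((cst c * alpha) ^ (CARD('p) - 1) - 1)"
    using fermat1_K[OF assms(2)] P1val[where 'p='p] by simp
  thus ?thesis using fermat1_K[OF assms(2)] by (simp add: power_mult_distrib)
qed

lemma FI: assumes "odd CARD('p::prime_card)" "i \<le> CARD('p) - 1"
  shows "(of_nat (fact i) * of_nat (fact (CARD('p) - 1 - i)) :: 'p mod_ring poly fract) = - ((- 1) ^ i)"
  using assms(2)
proof (induction i)
  case 0
  then show ?case using wilson_K[OF assms(1)] by simp
next
  case (Suc i)
  have a: "CARD('p) - 1 - i = Suc (CARD('p) - 1 - Suc i)" using Suc.prems by auto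
  have b: "(of_nat (Suc (CARD('p) - 1 - Suc i)) :: 'p mod_ring poly fract) = - of_nat (Suc i)"
    using of_nat_sub_K[where 'p='p, of "Suc i"] Suc.prems a by simp
  have c: "fact (CARD('p) - 1 - i) = Suc (CARD('p) - 1 - Suc i) * fact (CARD('p) - 1 - Suc i)"
    by (subst a) (simp only: fact_Suc of_nat_id)
  have "(of_nat (fact i) * of_nat (fact (CARD('p) - 1 - i)) :: 'p mod_ring poly fract)
     = of_nat (fact i) * ((- of_nat (Suc i)) * of_nat (fact (CARD('p) - 1 - Suc i)))"
    unfolding c of_nat_mult b by (simp only:)
  also have "\<dots> = - (of_nat (Suc i) * of_nat (fact i) * of_nat (fact (CARD('p) - 1 - Suc i)))"
    by (simp add: algebra_simps)
  finally have "(of_nat (fact i) * of_nat (fact (CARD('p) - 1 - i)) :: 'p mod_ring poly fract)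
     = - (of_nat (Suc i) * of_nat (fact i) * of_nat (fact (CARD('p) - 1 - Suc i)))" .
  hence "(of_nat (Suc i) * of_nat (fact i) * of_nat (fact (CARD('p) - 1 - Suc i)) :: 'p mod_ring poly fract)
     = (- 1) ^ i" using Suc by simp
  moreover have Y: "(of_nat (fact (Suc i)) :: 'p mod_ring poly fract) = of_nat (Suc i) * of_nat (fact i)"
    by (simp only: fact_Suc of_nat_id of_nat_mult)
  ultimately have "(of_nat (fact (Suc i)) * of_nat (fact (CARD('p) - 1 - Suc i)) :: 'p mod_ring poly fract) = (- 1) ^ i"
    by (simp only: mult.assoc)
  thus ?case by simp
qed

abbreviation beta :: "'p::prime_card mod_ring poly fract" where "beta \<equiv> alpha ^ CARD('p) - alpha"

definition Eop :: "'p::prime_card mod_ring \<Rightarrow> 'p mod_ring poly fract poly \<Rightarrow> 'p mod_ring poly fract poly" where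
  "Eop c y = [:0,1:] * pderiv y - smult (cst c) ([:- alpha, 1:] * y)"

lemma coeff_Eop: "coeff (Eop c y) n = (case n of 0 \<Rightarrow> cst c * alpha * coeff y 0
   | Suc m \<Rightarrow> of_nat (Suc m) * coeff y (Suc m) - cst c * coeff y m + cst c * alpha * coeff y (Suc m))"
  unfolding Eop_def by (cases n) (simp_all add: coeff_pderiv algebra_simps)

lemma Eop_diff: "Eop c (y - z) = Eop c y - Eop c z"
  by (rule poly_eqI) (simp add: coeff_Eop split: nat.split, simp add: algebra_simps)

lemma Eop_smult: "Eop c (smult a y) = smult a (Eop c y)"
  by (rule poly_eqI) (simp add: coeff_Eop split: nat.split, simp add: algebra_simps)

lemma Eop_mult: "Eop (a + b) (y * z) = Eop a y * z + y * Eop b z"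
  unfolding Eop_def by (simp add: pderiv_mult cst_add smult_add_left algebra_simps mult_smult_left mult_smult_right)

lemma pderiv_modulus: "pderiv (modulus :: 'p::prime_card mod_ring poly fract poly) = 0"
  unfolding modulus_def by (simp add: pderiv_diff pderiv_monom of_nat_card_K pderiv_pCons)

lemma Eop_modmult: "Eop c (modulus * g) = modulus * Eop c g"
  unfolding Eop_def by (simp add: pderiv_mult pderiv_modulus algebra_simps mult_smult_left mult_smult_right)

lemma coeff_modulus: "coeff (modulus :: 'p::prime_card mod_ring poly fract poly) n
   = (if n = CARD('p) then 1 else 0) - (if n = 0 then beta else 0)"
  unfolding modulus_def by (cases n) (auto simp: coeff_monom)

lemma degree_modulus: "degree (modulus :: 'p::prime_card mod_ring poly fract poly) = CARD('p)"
proof (rule antisym)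
  show "degree (modulus :: 'p::prime_card mod_ring poly fract poly) \<le> CARD('p)"
    by (rule degree_le) (auto simp: coeff_modulus)
  show "CARD('p) \<le> degree (modulus :: 'p::prime_card mod_ring poly fract poly)"
    by (rule le_degree) (use card_ge[where 'p='p] in \<open>simp add: coeff_modulus\<close>)
qed

lemma modulus_nz: "(modulus :: 'p::prime_card mod_ring poly fract poly) \<noteq> 0"
  using degree_modulus[where 'p='p] card_ge[where 'p='p] by auto

lemma coeff_modulus_mult: "coeff ((modulus :: 'p::prime_card mod_ring poly fract poly) * d) k
   = (if k < CARD('p) then 0 else coeff d (k - CARD('p))) - beta * coeff d k"
proof -
  have "modulus * d = monom 1 CARD('p) * d - smult beta d"
    unfolding modulus_def by (simp add: left_diff_distrib)
  thus ?thesis by (simp add: coeff_monom_mult)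
qed

lemma dvd_Eop_coeffs:
  fixes y :: "'p::prime_card mod_ring poly fract poly"
  assumes "modulus dvd Eop c y" "degree y < CARD('p)" "0 < k" "k < CARD('p)"
  shows "coeff (Eop c y) k = 0"
proof -
  obtain g where Eg: "Eop c y = modulus * g" using assms(1) by (elim dvdE)
  have dE: "degree (Eop c y) \<le> CARD('p)"
  proof (rule degree_le, intro allI impI)
    fix n assume "CARD('p) < n"
    then obtain m where n: "n = Suc m" "CARD('p) \<le> m" by (cases n) auto
    have "coeff y m = 0" "coeff y (Suc m) = 0" using n assms(2) by (auto intro: coeff_eq_0)
    thus "coeff (Eop c y) n = 0" unfolding n by (simp add: coeff_Eop)
  qed
  show ?thesis
  proof (cases "g = 0")
    case True thus ?thesis using Eg by simp
  next
    case False
    have "degree (modulus * g) = CARD('p) + degree g"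
      using degree_mult_eq[OF modulus_nz False] degree_modulus by simp
    hence "degree g = 0" using dE Eg by simp
    hence "g = [:coeff g 0:]" using degree_0_id by metis
    hence "Eop c y = smult (coeff g 0) modulus" using Eg by (metis mult.commute mult_pCons_left mult_zero_left add_0_right smult_0_right pCons_0_0)
    thus ?thesis using assms(3,4) by (simp add: coeff_modulus)
  qed
qed

lemma U1:
  fixes y :: "'p::prime_card mod_ring poly fract poly"
  assumes "modulus dvd Eop c y" "degree y < CARD('p)" "c \<noteq> 0" "coeff y (CARD('p) - 1) = 0"
  shows "y = 0"
proof -
  have cnz: "cst c \<noteq> 0" using assms(3) cst_eq_iff[of c 0] by (simp add: cst_zero)
  have rec: "cst c * coeff y m = (of_nat (Suc m) + cst c * alpha) * coeff y (Suc m)" if "Suc m < CARD('p)" for m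
    using dvd_Eop_coeffs[OF assms(1,2), of "Suc m"] that by (simp add: coeff_Eop algebra_simps)
  have down: "coeff y (CARD('p) - 1 - d) = 0" if "d < CARD('p)" for d
    using that
  proof (induction d)
    case 0 thus ?case using assms(4) by simp
  next
    case (Suc d)
    have a: "Suc (CARD('p) - 1 - Suc d) = CARD('p) - 1 - d" "Suc (CARD('p) - 1 - Suc d) < CARD('p)"
      using Suc.prems by auto
    have "cst c * coeff y (CARD('p) - 1 - Suc d) = 0"
      using rec[OF a(2)] Suc by (simp only: a(1)) simp
    thus ?case using cnz by simp
  qed
  show ?thesis
  proof (rule poly_eqI)
    fix k
    show "coeff y k = coeff 0 k"
    proof (cases "k < CARD('p)")
      case True
      hence e: "CARD('p) - 1 - (CARD('p) - 1 - k) = k" by auto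
      have "CARD('p) - 1 - k < CARD('p)" using True by auto
      from down[OF this] show ?thesis unfolding e by simp
    next
      case False thus ?thesis using assms(2) by (simp add: coeff_eq_0)
    qed
  qed
qed

lemma U0:
  fixes y :: "'p::prime_card mod_ring poly fract poly"
  assumes "modulus dvd Eop 0 y" "degree y < CARD('p)"
  shows "y = [:coeff y 0:]"
proof (rule poly_eqI)
  fix k
  show "coeff y k = coeff [:coeff y 0:] k"
  proof (cases k)
    case 0 thus ?thesis by simp
  next
    case (Suc m)
    show ?thesis
    proof (cases "k < CARD('p)")
      case True
      have "coeff (Eop 0 y) k = 0" using dvd_Eop_coeffs[OF assms, of k] True Suc by simp
      hence "of_nat k * coeff y k = 0" using Suc by (simp add: coeff_Eop cst_zero)
      thus ?thesis using of_nat_nz_K[where 'p='p, of k] True Suc by simp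
    next
      case False thus ?thesis using assms(2) Suc by (simp add: coeff_eq_0)
    qed
  qed
qed

lemma red:
  fixes Q :: "'p::prime_card mod_ring poly fract poly"
  assumes "degree Q \<le> 2 * CARD('p) - 2"
  shows "Q = modulus * (Q div modulus) + Q mod modulus" "degree (Q mod modulus) < CARD('p)"
    "degree (Q div modulus) \<le> CARD('p) - 2"
proof -
  show Qe: "Q = modulus * (Q div modulus) + Q mod modulus" by (simp add: mult.commute)
  show dy: "degree (Q mod modulus) < CARD('p)"
    using degree_mod_less[OF modulus_nz, of Q] degree_modulus[where 'p='p] card_ge[where 'p='p] by auto
  show "degree (Q div modulus) \<le> CARD('p) - 2"
  proof (cases "Q div modulus = 0")
    case True thus ?thesis by simp
  next
    case False
    have "degree (modulus * (Q div modulus)) = CARD('p) + degree (Q div modulus)"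
      using degree_mult_eq[OF modulus_nz False] degree_modulus by simp
    moreover have "modulus * (Q div modulus) = Q - Q mod modulus" using Qe by (simp add: algebra_simps)
    moreover have "degree (Q - Q mod modulus) \<le> 2 * CARD('p) - 2"
      using degree_diff_le_max[of Q "Q mod modulus"] assms dy by auto
    ultimately show ?thesis by simp
  qed
qed


lemma E_Lsub: assumes "odd CARD('p::prime_card)" "(c::'p mod_ring) \<noteq> 0"
  shows "Eop c (Lsub c) = smult (cst c) modulus"
proof (rule poly_eqI)
  fix n
  show "coeff (Eop c (Lsub c)) n = coeff (smult (cst c) modulus) n"
  proof (cases n)
    case 0
    have p1: "alpha ^ CARD('p) = alpha * alpha ^ (CARD('p) - 1)"
      using card_ge[where 'p='p] by (metis Suc_diff_1 le_trans one_le_numeral  not_one_le_zero power_Suc zero_less_iff_neq_zero)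
    show ?thesis using 0 card_ge[where 'p='p]
      by (simp add: coeff_Eop coeff_Lsub coeff_modulus Ac0[OF assms] p1 algebra_simps)
  next
    case (Suc m)
    consider "Suc m < CARD('p)" | "Suc m = CARD('p)" | "Suc m > CARD('p)" by linarith
    thus ?thesis
    proof cases
      case 1
      have "coeff (Eop c (Lsub c)) n = of_nat (Suc m) * Ac c (Suc m) - cst c * Ac c m + cst c * alpha * Ac c (Suc m)"
        using 1 Suc by (simp add: coeff_Eop coeff_Lsub)
      also have "\<dots> = 0" using Ac_rec[OF 1, of c] by (simp add: algebra_simps)
      finally show ?thesis using 1 Suc by (simp add: coeff_modulus)
    next
      case 2
      have m: "m = CARD('p) - 1" using 2 by simp
      have "coeff (Eop c (Lsub c)) n = of_nat (Suc m) * coeff (Lsub c) (Suc m) - cst c * coeff (Lsub c) m + cst c * alpha * coeff (Lsub c) (Suc m)"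
        unfolding Suc by (simp add: coeff_Eop)
      also have "\<dots> = cst c" using 2 Ac_top[OF assms] card_ge[where 'p='p] by (simp add: coeff_Lsub m)
      finally show ?thesis using 2 Suc by (simp add: coeff_modulus)
    next
      case 3
      thus ?thesis using Suc by (simp add: coeff_Eop coeff_Lsub coeff_modulus)
    qed
  qed
qed

lemma field_aux2:
  fixes u w G1 G2 Fi Fk :: "'a::field"
  assumes F: "Fi * Fk = - ((- 1) ^ i)" and V: "(- w) ^ k * (- w) ^ i = 1"
  shows "G1 * u ^ i / Fi * (G2 * (- w) ^ k / Fk) = - ((u / w) ^ i * G1 * G2)"
proof -
  have wi: "(- w) ^ i \<noteq> 0" using V by (metis mult_zero_right zero_neq_one)
  have vk: "(- w) ^ k = inverse ((- w) ^ i)" using V by (metis inverse_unique mult.commute)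
  have s: "(- 1 :: 'a) ^ i * (- 1) ^ i = 1" by (simp add: power_mult_distrib[symmetric])
  have Fi: "inverse (Fi * Fk) = - ((- 1) ^ i)"
    unfolding F using s by (metis inverse_minus_eq inverse_unique)
  have "G1 * u ^ i / Fi * (G2 * (- w) ^ k / Fk) = G1 * G2 * u ^ i * (- w) ^ k * inverse (Fi * Fk)"
    by (simp add: divide_inverse inverse_mult_distrib mult_ac)
  also have "\<dots> = - (G1 * G2 * u ^ i * inverse ((- w) ^ i) * (- 1) ^ i)" unfolding vk Fi by simp
  also have "inverse ((- w) ^ i) * (- 1) ^ i = inverse (w ^ i)"
    by (simp add: power_minus[of w] inverse_mult_distrib power_inverse mult.assoc[symmetric] s)
  hence "- (G1 * G2 * u ^ i * inverse ((- w) ^ i) * (- 1) ^ i) = - (G1 * G2 * u ^ i * inverse (w ^ i))"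
    by (simp add: mult.assoc)
  also have "\<dots> = - ((u / w) ^ i * G1 * G2)" by (simp add: divide_inverse power_mult_distrib power_inverse mult_ac)
  finally show ?thesis .
qed

lemma top_coeff: assumes "odd CARD('p::prime_card)" "(c1::'p mod_ring) \<noteq> 0" "c2 \<noteq> 0"
  shows "coeff (Lsub c1 * Lsub c2) (CARD('p) - 1) = - bcoef c1 c2"
proof -
  have "coeff (Lsub c1 * Lsub c2) (CARD('p) - 1) = (\<Sum>i\<le>CARD('p) - 1. Ac c1 i * Ac c2 (CARD('p) - 1 - i))"
    unfolding coeff_mult using card_ge[where 'p='p]
    by (intro sum.cong refl) (auto simp: coeff_Lsub)
  also have "\<dots> = (\<Sum>i\<le>CARD('p) - 1. - ((- cst c1 / cst c2) ^ i * gbinom (cst c1 * alpha - 1) (CARD('p) - 1 - i)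
                   * gbinom (cst c2 * alpha - 1) i))"
  proof (rule sum.cong[OF refl])
    fix i assume i: "i \<in> {..CARD('p) - 1}"
    have ii: "CARD('p) - 1 - (CARD('p) - 1 - i) = i" using i by auto
    have ev: "even (CARD('p) - 1)" using assms(1) card_ge[where 'p='p] by simp
    have V: "(- cst c2) ^ (CARD('p) - 1 - i) * (- cst c2) ^ i = 1"
    proof -
      have "(- cst c2) ^ (CARD('p) - 1 - i) * (- cst c2) ^ i = (- cst c2) ^ (CARD('p) - 1)"
      proof -
        have e: "CARD('p) - 1 - i + i = CARD('p) - 1" using i by auto
        show ?thesis by (simp only: power_add[symmetric] e)
      qed
      also have "\<dots> = 1" using power_minus_even[OF ev, of "cst c2"] fermat1_K[OF assms(3)] by simp
      finally show ?thesis .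
    qed
    show "Ac c1 i * Ac c2 (CARD('p) - 1 - i) = - ((- cst c1 / cst c2) ^ i * gbinom (cst c1 * alpha - 1) (CARD('p) - 1 - i)
                   * gbinom (cst c2 * alpha - 1) i)"
      unfolding Ac_def ii by (rule field_aux2[OF FI[OF assms(1)] V]) (use i in simp)
  qed
  also have "\<dots> = - bcoef c1 c2" unfolding bcoef_def Let_def by (simp add: sum_negf)
  finally show ?thesis .
qed


lemma term2: assumes "odd CARD('p::prime_card)" "(c::'p mod_ring) \<noteq> 0" "1 \<le> i" "i < CARD('p)"
  shows "cst c ^ (CARD('p) - 2) * (Ac c i * Ac (- c) (CARD('p) - i))
     = (\<Prod>m\<in>{1..<CARD('p)} - {CARD('p) - i}. cst c * alpha - of_nat m)"
proof -
  define x where "x = cst c * alpha"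
  define d1 where "d1 = CARD('p) - 1 - i"
  define d2 where "d2 = i - 1"
  have mc: "- c \<noteq> 0" using assms(2) by simp
  have A1: "cst c ^ d1 * Ac c i = - (\<Prod>m\<in>{1..d1}. x - of_nat m)"
  proof -
    have "CARD('p) - 1 - d1 = i" "d1 < CARD('p)" using assms unfolding d1_def by auto
    thus ?thesis using Acl[OF assms(1,2), of d1] unfolding x_def by simp
  qed
  have A2': "cst (- c) ^ d2 * Ac (- c) (CARD('p) - i) = - (\<Prod>m\<in>{1..d2}. cst (- c) * alpha - of_nat m)"
  proof -
    have "CARD('p) - 1 - d2 = CARD('p) - i" "d2 < CARD('p)" using assms unfolding d2_def by auto
    thus ?thesis using Acl[OF assms(1) mc, of d2] by simp
  qed
  have P2: "(\<Prod>m\<in>{1..d2}. cst (- c) * alpha - of_nat m) = (- 1) ^ d2 * (\<Prod>m\<in>{1..d2}. x + of_nat m)"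
  proof -
    have "(\<Prod>m\<in>{1..d2}. cst (- c) * alpha - of_nat m) = (\<Prod>m\<in>{1..d2}. - (x + of_nat m))"
      unfolding x_def by (rule prod.cong[OF refl]) (simp add: cst.hom_uminus algebra_simps)
    also have "\<dots> = (- 1) ^ d2 * (\<Prod>m\<in>{1..d2}. x + of_nat m)" unfolding prod_uminus by simp
    finally show ?thesis .
  qed
  have R: "(\<Prod>m\<in>{1..d2}. x + of_nat m) = (\<Prod>m\<in>{CARD('p) - d2..CARD('p) - 1}. x - of_nat m)"
  proof (rule prod.reindex_bij_witness[of _ "\<lambda>m. CARD('p) - m" "\<lambda>m. CARD('p) - m"])
    fix m assume m: "m \<in> {1..d2}"
    show "CARD('p) - (CARD('p) - m) = m" using m assms unfolding d2_def by auto
    show "CARD('p) - m \<in> {CARD('p) - d2..CARD('p) - 1}" using m assms unfolding d2_def by auto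
    have "m \<le> CARD('p)" using m assms unfolding d2_def by auto
    thus "x - of_nat (CARD('p) - m) = x + of_nat m"
      using of_nat_sub_K[where 'p='p, of m] by simp
  next
    fix m assume m: "m \<in> {CARD('p) - d2..CARD('p) - 1}"
    show "CARD('p) - (CARD('p) - m) = m" using m by auto
    show "CARD('p) - m \<in> {1..d2}" using m assms unfolding d2_def by auto
  qed
  have U: "{1..<CARD('p)} - {CARD('p) - i} = {1..d1} \<union> {CARD('p) - d2..CARD('p) - 1}"
    using assms unfolding d1_def d2_def by auto
  have D: "{1..d1} \<inter> {CARD('p) - d2..CARD('p) - 1} = {}"
    using assms unfolding d1_def d2_def by auto
  have PP: "(\<Prod>m\<in>{1..<CARD('p)} - {CARD('p) - i}. x - of_nat m)
      = (\<Prod>m\<in>{1..d1}. x - of_nat m) * (\<Prod>m\<in>{CARD('p) - d2..CARD('p) - 1}. x - of_nat m)"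
    unfolding U by (rule prod.union_disjoint) (use D in auto)
  have dd: "d1 + d2 = CARD('p) - 2" using assms unfolding d1_def d2_def by auto
  have "(- 1) ^ d2 * (cst c ^ (CARD('p) - 2) * (Ac c i * Ac (- c) (CARD('p) - i)))
      = (cst c ^ d1 * Ac c i) * (cst (- c) ^ d2 * Ac (- c) (CARD('p) - i))"
    unfolding dd[symmetric] by (simp add: cst.hom_uminus power_minus[of "cst c"] power_add mult_ac)
  also have "\<dots> = (- 1) ^ d2 * (\<Prod>m\<in>{1..<CARD('p)} - {CARD('p) - i}. x - of_nat m)"
    unfolding A1 A2' P2 R PP by (simp add: mult_ac)
  finally show ?thesis unfolding x_def by simp
qed

lemma sum2: assumes "odd CARD('p::prime_card)" "(c::'p mod_ring) \<noteq> 0"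
  shows "(\<Sum>i\<in>{1..<CARD('p)}. Ac c i * Ac (- c) (CARD('p) - i)) = - (alpha ^ (CARD('p) - 2))"
proof -
  have cnz: "cst c ^ (CARD('p) - 2) \<noteq> 0" using assms(2) cst_eq_iff[of c 0] by (simp add: cst_zero)
  have "cst c ^ (CARD('p) - 2) * (\<Sum>i\<in>{1..<CARD('p)}. Ac c i * Ac (- c) (CARD('p) - i))
     = (\<Sum>i\<in>{1..<CARD('p)}. \<Prod>m\<in>{1..<CARD('p)} - {CARD('p) - i}. cst c * alpha - of_nat m)"
    unfolding sum_distrib_left by (rule sum.cong[OF refl]) (use term2[OF assms] in auto)
  also have "\<dots> = (\<Sum>j\<in>{1..<CARD('p)}. \<Prod>m\<in>{1..<CARD('p)} - {j}. cst c * alpha - of_nat m)"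
    by (rule sum.reindex_bij_witness[of _ "\<lambda>m. CARD('p) - m" "\<lambda>m. CARD('p) - m"]) auto
  also have "\<dots> = - ((cst c * alpha) ^ (CARD('p) - 2))" by (rule P2val)
  also have "\<dots> = cst c ^ (CARD('p) - 2) * (- (alpha ^ (CARD('p) - 2)))" by (simp add: power_mult_distrib)
  finally have E: "cst c ^ (CARD('p) - 2) * (\<Sum>i\<in>{1..<CARD('p)}. Ac c i * Ac (- c) (CARD('p) - i))
     = cst c ^ (CARD('p) - 2) * (- (alpha ^ (CARD('p) - 2)))" .
  show ?thesis using E unfolding mult_left_cancel[OF cnz] .
qed

lemma coeffp: "coeff (Lsub (c1::'p::prime_card mod_ring) * Lsub c2) CARD('p)
    = (\<Sum>i\<in>{1..<CARD('p)}. Ac c1 i * Ac c2 (CARD('p) - i))"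
proof -
  have ins: "{..CARD('p)} = insert 0 (insert CARD('p) {1..<CARD('p)})" using card_ge[where 'p='p] by auto
  show ?thesis unfolding coeff_mult ins
    by (simp add: coeff_Lsub)
qed


lemma degQ_le:
  fixes Q1 Q2 :: "'p::prime_card mod_ring poly fract poly"
  assumes "degree Q1 \<le> CARD('p) - 1" "degree Q2 \<le> CARD('p) - 1" "degree Q3 \<le> CARD('p) - 1"
  shows "degree (Q1 * Q2 - Q3) \<le> 2 * CARD('p) - 2"
proof (rule degree_diff_le)
  show "degree (Q1 * Q2) \<le> 2 * CARD('p) - 2"
    using degree_mult_le[of Q1 Q2] assms(1,2) card_ge[where 'p='p] by linarith
  show "degree Q3 \<le> 2 * CARD('p) - 2" using assms(3) by linarith
qed

lemma mod_nz: assumes "0 < r" "r < CARD('p::prime_card)" shows "(of_nat r :: 'p mod_ring) \<noteq> 0"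
  using of_nat_nz_mod[OF assms] .

theorem lemma10:
  assumes "odd (CARD('p::prime_card))"
  shows "(\<forall>r s :: nat. 0 < r \<and> r < CARD('p) \<and> 0 < s \<and> s < CARD('p) \<and> r + s \<noteq> CARD('p) \<longrightarrow>
            modulus dvd (Lsub (of_nat r :: 'p mod_ring) * Lsub (of_nat s)
                         - smult (bcoef (of_nat r) (of_nat s)) (Lsub (of_nat (r + s)))))
       \<and> (\<forall>r :: nat. 0 < r \<and> r < CARD('p) \<longrightarrow>
            (modulus :: 'p mod_ring poly fract poly) dvd
              (Lsub (of_nat r) * Lsub (- of_nat r) - [: 1 - alpha ^ (CARD('p) - 1) :]))"
proof (intro conjI allI impI)
  fix r s :: nat
  assume rs: "0 < r \<and> r < CARD('p) \<and> 0 < s \<and> s < CARD('p) \<and> r + s \<noteq> CARD('p)"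
  define r' where "r' = (of_nat r :: 'p mod_ring)"
  define s' where "s' = (of_nat s :: 'p mod_ring)"
  define t' where "t' = (of_nat (r + s) :: 'p mod_ring)"
  have r'nz: "r' \<noteq> 0" unfolding r'_def using mod_nz rs by blast
  have s'nz: "s' \<noteq> 0" unfolding s'_def using mod_nz rs by blast
  have t'nz: "t' \<noteq> 0"
  proof
    assume "t' = 0"
    hence "CARD('p) dvd r + s" unfolding t'_def by (rule of_nat_0_mod_ring_dvd)
    then obtain k where k: "r + s = CARD('p) * k" by (elim dvdE)
    show False
    proof (cases k)
      case 0 thus False using k rs by simp
    next
      case (Suc k') 
      show False
      proof (cases k')
        case 0 thus False using k rs Suc by simp
      next
        case (Suc k'') thus False using k rs \<open>k = Suc k'\<close> by (simp add: algebra_simps)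
      qed
    qed
  qed
  have t'eq: "t' = r' + s'" unfolding r'_def s'_def t'_def by simp
  define b where "b = bcoef r' s'"
  define Q where "Q = Lsub r' * Lsub s' - smult b (Lsub t')"
  have EQ: "modulus dvd Eop t' Q"
  proof -
    have "Eop t' Q = smult (cst r') modulus * Lsub s' + Lsub r' * smult (cst s') modulus
                      - smult b (smult (cst t') modulus)"
      unfolding Q_def Eop_diff Eop_smult t'eq Eop_mult
      unfolding t'eq[symmetric] E_Lsub[OF assms r'nz] E_Lsub[OF assms s'nz] E_Lsub[OF assms t'nz] ..
    also have "modulus dvd \<dots>"
      by (intro dvd_diff dvd_add dvd_smult dvd_mult2 dvd_mult dvd_refl)
    finally show ?thesis .
  qed
  have degQ: "degree Q \<le> 2 * CARD('p) - 2" unfolding Q_def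
    by (rule degQ_le[OF degree_Lsub degree_Lsub]) (rule order.trans[OF degree_smult_le degree_Lsub])
  note R = red[OF degQ]
  define d where "d = Q div modulus"
  define y where "y = Q mod modulus"
  have Qe: "Q = modulus * d + y" using R(1) unfolding d_def y_def .
  have ye: "y = Q - modulus * d" using Qe by simp
  have Ey: "modulus dvd Eop t' y"
    unfolding ye Eop_diff Eop_modmult by (intro dvd_diff EQ dvd_mult2 dvd_refl)
  have dd: "coeff d (CARD('p) - 1) = 0"
    using R(3) card_ge[where 'p='p] unfolding d_def by (intro coeff_eq_0) linarith
  have cQ: "coeff Q (CARD('p) - 1) = 0"
    unfolding Q_def b_def using top_coeff[OF assms r'nz s'nz] Ac_top[OF assms t'nz] card_ge[where 'p='p]
    by (simp add: coeff_Lsub)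
  have cy: "coeff y (CARD('p) - 1) = 0"
    unfolding ye using cQ dd card_ge[where 'p='p] by (simp add: coeff_modulus_mult)
  have "y = 0" by (rule U1[OF Ey _ t'nz cy]) (use R(2) in \<open>simp add: y_def\<close>)
  hence "Q = modulus * d" using Qe by simp
  hence "modulus dvd Q" by simp
  thus "modulus dvd (Lsub (of_nat r :: 'p mod_ring) * Lsub (of_nat s)
                         - smult (bcoef (of_nat r) (of_nat s)) (Lsub (of_nat (r + s))))"
    unfolding Q_def b_def r'_def s'_def t'_def .
next
  fix r :: nat
  assume r: "0 < r \<and> r < CARD('p)"
  define r' where "r' = (of_nat r :: 'p mod_ring)"
  have r'nz: "r' \<noteq> 0" unfolding r'_def using mod_nz r by blast
  have mr'nz: "- r' \<noteq> 0" using r'nz by simp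
  define Q where "Q = Lsub r' * Lsub (- r')"
  have EQ: "modulus dvd Eop 0 Q"
  proof -
    have "Eop 0 Q = smult (cst r') modulus * Lsub (- r') + Lsub r' * smult (cst (- r')) modulus"
      using Eop_mult[of r' "- r'" "Lsub r'" "Lsub (- r')"]
      unfolding Q_def E_Lsub[OF assms r'nz] E_Lsub[OF assms mr'nz] by simp
    also have "modulus dvd \<dots>"
      by (intro dvd_diff dvd_add dvd_smult dvd_mult2 dvd_mult dvd_refl)
    finally show ?thesis .
  qed
  have degQ: "degree Q \<le> 2 * CARD('p) - 2"
    using degQ_le[of "Lsub r'" "Lsub (- r')" 0] degree_Lsub[of r'] degree_Lsub[of "- r'"] unfolding Q_def by simp
  note R = red[OF degQ]
  define d where "d = Q div modulus"
  define y where "y = Q mod modulus"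
  have Qe: "Q = modulus * d + y" using R(1) unfolding d_def y_def .
  have ye: "y = Q - modulus * d" using Qe by simp
  have Ey: "modulus dvd Eop 0 y"
    unfolding ye Eop_diff Eop_modmult by (intro dvd_diff EQ dvd_mult2 dvd_refl)
  have yc: "y = [:coeff y 0:]" by (rule U0[OF Ey]) (use R(2) in \<open>simp add: y_def\<close>)
  have dp: "coeff d CARD('p) = 0"
    using R(3) card_ge[where 'p='p] unfolding d_def by (intro coeff_eq_0) linarith
  have yp: "coeff y CARD('p) = 0"
    using R(2) unfolding y_def by (intro coeff_eq_0) linarith
  have c0: "coeff Q 0 = - beta * coeff d 0 + coeff y 0"
    using arg_cong[OF Qe, of "\<lambda>q. coeff q 0"] card_ge[where 'p='p] by (simp add: coeff_modulus_mult algebra_simps)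
  have cp: "coeff Q CARD('p) = coeff d 0"
    using arg_cong[OF Qe, of "\<lambda>q. coeff q CARD('p)"] dp yp by (simp add: coeff_modulus_mult)
  have Q0: "coeff Q 0 = (1 - alpha ^ (CARD('p) - 1)) ^ 2"
    unfolding Q_def using Ac0[OF assms r'nz] Ac0[OF assms mr'nz] card_ge[where 'p='p]
    by (simp add: coeff_mult coeff_Lsub power2_eq_square)
  have Qp: "coeff Q CARD('p) = - (alpha ^ (CARD('p) - 2))"
    unfolding Q_def coeffp using sum2[OF assms r'nz] by simp
  have pw: "alpha ^ (CARD('p) - 1) = alpha * alpha ^ (CARD('p) - 2)" "alpha ^ CARD('p) = alpha * (alpha * alpha ^ (CARD('p) - 2))"
  proof -
    have a: "CARD('p) - 1 = Suc (CARD('p) - 2)" "CARD('p) = Suc (Suc (CARD('p) - 2))" using card_ge[where 'p='p] by auto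
    show "alpha ^ (CARD('p) - 1) = alpha * alpha ^ (CARD('p) - 2)" by (subst a(1)) simp
    show "alpha ^ CARD('p) = alpha * (alpha * alpha ^ (CARD('p) - 2))" by (subst a(2)) simp
  qed
  have y0: "coeff y 0 = 1 - alpha ^ (CARD('p) - 1)"
  proof -
    have "coeff y 0 = coeff Q 0 + beta * coeff Q CARD('p)" using c0 cp by (simp add: algebra_simps)
    also have "\<dots> = 1 - alpha ^ (CARD('p) - 1)" unfolding Q0 Qp pw by (simp add: algebra_simps power2_eq_square)
    finally show ?thesis .
  qed
  have "Q - [: 1 - alpha ^ (CARD('p) - 1) :] = modulus * d" using Qe yc y0 by (metis add_diff_cancel_right')
  hence "modulus dvd (Q - [: 1 - alpha ^ (CARD('p) - 1) :])" by simp
  thus "(modulus :: 'p mod_ring poly fract poly) dvd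
              (Lsub (of_nat r) * Lsub (- of_nat r) - [: 1 - alpha ^ (CARD('p) - 1) :])"
    unfolding Q_def r'_def .
qed

end
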